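(* Let two circles $\Omega$ and $\omega$ meet at a point $X$. Let $A, B, C, D$ be points on $\omega$ with $AB \parallel CD$. Let lines $XA, XB, XC, XD$ meet $\Omega$ again at $E, F, G, H$ respectively. Then $EF \parallel GH$. *)

theory Defs
  imports "HOL-Analysis.Analysis"
begin

text \<open>Line PQ (P \<noteq> Q) is parallel to line RS (R \<noteq> S) iff their direction
  vectors are real multiples of one another (coincident lines count as parallel).\<close>

definition parallel :: "complex \<Rightarrow> complex \<Rightarrow> complex \<Rightarrow> complex \<Rightarrow> bool" where
  "parallel P Q R S \<longleftrightarrow> P \<noteq> Q \<and> R \<noteq> S \<and> (\<exists>c::real. S - R = c *\<^sub>R (Q - P))"

end

theory Submission
  imports Defs
begin

lemma chord_sq:
  fixes u v :: complex
  assumes "cmod u = 1" "cmod v = 1"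
  shows "(v - u)^2 = u * v * complex_of_real (2 * Re (v * cnj u) - 2)"
proof -
  have uu: "u * cnj u = 1" using complex_norm_square[of u] assms(1) by simp
  have vv: "v * cnj v = 1" using complex_norm_square[of v] assms(2) by simp
  have "complex_of_real (2 * Re (v * cnj u)) = v * cnj u + cnj (v * cnj u)"
    by (simp add: complex_eq_iff)
  hence "u * v * complex_of_real (2 * Re (v * cnj u) - 2) = u * v * (v * cnj u + u * cnj v - 2)"
    by simp
  also have "\<dots> = v * v * (u * cnj u) + u * u * (v * cnj v) - 2 * u * v" by (simp add: algebra_simps)
  also have "\<dots> = (v-u)^2" using uu vv by (simp add: power2_eq_square algebra_simps)
  finally show ?thesis by simp
qed

lemma chord_neg:
  fixes u v :: complex
  assumes "cmod u = 1" "cmod v = 1" "u \<noteq> v"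
  shows "2 * Re (v * cnj u) - 2 < 0"
proof -
  have n: "cmod (v * cnj u) = 1" using assms by (simp add: norm_mult)
  have "Re (v * cnj u) \<le> 1" using complex_Re_le_cmod[of "v * cnj u"] n by simp
  moreover have "Re (v * cnj u) \<noteq> 1"
  proof
    assume h: "Re (v * cnj u) = 1"
    have "(Re (v * cnj u))^2 + (Im (v * cnj u))^2 = 1" using n cmod_power2[of "v * cnj u"] by simp
    hence "Im (v * cnj u) = 0" using h by simp
    hence "v * cnj u = 1" using h by (simp add: complex_eq_iff)
    hence "v * cnj u * u = u" by simp
    moreover have "cnj u * u = 1" using complex_norm_square[of u] assms(1) by (simp add: mult.commute)
    ultimately have "v = u" by (metis mult.assoc mult.right_neutral)
    thus False using assms(3) by simp
  qed
  ultimately show ?thesis by simp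
qed

lemma sq_real:
  fixes z :: complex and t :: real
  assumes "z^2 = complex_of_real t" "t \<ge> 0"
  shows "z = complex_of_real (Re z)"
proof -
  have "Re z * Im z = 0" using arg_cong[OF assms(1), of Im]
    by (auto simp add: power2_eq_square)
  moreover have "(Re z)^2 - (Im z)^2 = t" using arg_cong[OF assms(1), of Re]
    by (simp add: power2_eq_square)
  ultimately have "Im z = 0" using assms(2)
  proof -
    assume a: "Re z * Im z = 0" and b: "(Re z)^2 - (Im z)^2 = t" and c: "t \<ge> 0"
    show "Im z = 0"
    proof (cases "Re z = 0")
      case True
      then have "(Im z)^2 = - t" using b by simp
      then have "(Im z)^2 \<le> 0" using c by simp
      then show ?thesis by simp
    next
      case False
      then show ?thesis using a by simp
    qed
  qed
  thus ?thesis by (simp add: complex_eq_iff)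
qed

lemma unit_par:
  fixes p q r s :: complex
  assumes "cmod p = 1" "cmod q = 1" "cmod r = 1" "cmod s = 1" "p \<noteq> q" "r \<noteq> s"
  shows "(\<exists>c::real. s - r = c *\<^sub>R (q - p)) \<longleftrightarrow> p * q = r * s"
proof -
  define k1 where "k1 = 2 * Re (q * cnj p) - 2"
  define k2 where "k2 = 2 * Re (s * cnj r) - 2"
  have k1: "k1 < 0" unfolding k1_def using chord_neg assms by blast
  have k2: "k2 < 0" unfolding k2_def using chord_neg assms by blast
  have e1: "(q - p)^2 = p * q * complex_of_real k1" unfolding k1_def using chord_sq assms by blast
  have e2: "(s - r)^2 = r * s * complex_of_real k2" unfolding k2_def using chord_sq assms by blast
  have pq0: "p * q \<noteq> 0" using assms by auto
  have rs0: "r * s \<noteq> 0" using assms by auto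
  show ?thesis
  proof
    assume "\<exists>c::real. s - r = c *\<^sub>R (q - p)"
    then obtain c :: real where c: "s - r = c *\<^sub>R (q - p)" by blast
    have "(s - r)^2 = complex_of_real (c^2) * (q - p)^2" using c
      by (simp add: scaleR_conv_of_real power_mult_distrib)
    hence "r * s * complex_of_real k2 = complex_of_real (c^2) * (p * q * complex_of_real k1)"
      using e1 e2 by simp
    hence rs: "r * s = complex_of_real (c^2 * k1 / k2) * (p * q)"
      using k2 by (simp add: field_simps)
    have na: "cmod (r * s) = 1" and nb: "cmod (p * q) = 1" using assms by (simp_all add: norm_mult)
    have neq: "cmod (r * s) = \<bar>c^2 * k1 / k2\<bar> * cmod (p * q)"
      using rs by (simp only: norm_mult norm_of_real)
    have "\<bar>c^2 * k1 / k2\<bar> = 1" by (metis na nb neq mult_1_right)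
    moreover have "c^2 * k1 / k2 \<ge> 0" using k1 k2
      by (simp add: divide_nonpos_neg mult_nonneg_nonpos)
    ultimately have "c^2 * k1 / k2 = 1" by (metis abs_of_nonneg)
    thus "p * q = r * s" using rs by (metis mult_1 of_real_1)
  next
    assume h: "p * q = r * s"
    have qp0: "q - p \<noteq> 0" using assms by simp
    define z where "z = (s - r) / (q - p)"
    have "z^2 = (s - r)^2 / (q - p)^2" unfolding z_def by (simp add: power_divide)
    also have "\<dots> = complex_of_real (k2 / k1)" using e1 e2 h pq0 rs0 k1
      by (simp add: field_simps)
    finally have "z = complex_of_real (Re z)" using sq_real k1 k2
      by (meson divide_nonpos_neg less_imp_le)
    hence "s - r = Re z *\<^sub>R (q - p)" unfolding z_def using qp0
      by (metis nonzero_eq_divide_eq scaleR_conv_of_real)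
    thus "\<exists>c::real. s - r = c *\<^sub>R (q - p)" by blast
  qed
qed

lemma coll_par:
  fixes X A E :: complex
  assumes "collinear {X, A, E}" "A \<noteq> X" "E \<noteq> X"
  shows "parallel X A X E"
proof -
  have "collinear {A, X, E}" using assms(1) by (simp add: insert_commute)
  hence "collinear {0, A - X, E - X}" by (subst (asm) collinear_3) simp
  hence "\<exists>c. E - X = c *\<^sub>R (A - X)" using assms(2,3) by (simp add: collinear_lemma)
  thus ?thesis unfolding parallel_def using assms by auto
qed

lemma circ_par:
  fixes P Q R S z0 z1 :: complex and r r' :: real
  assumes "r > 0" "r' > 0" "cmod (P - z0) = r" "cmod (Q - z0) = r" "cmod (R - z1) = r'" "cmod (S - z1) = r'"
    "P \<noteq> Q" "R \<noteq> S"
  shows "parallel P Q R S \<longleftrightarrow> ((P - z0) / r) * ((Q - z0) / r) = ((R - z1) / r') * ((S - z1) / r')"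
proof -
  define p where "p = (P - z0) / r"
  define q where "q = (Q - z0) / r"
  define u where "u = (R - z1) / r'"
  define v where "v = (S - z1) / r'"
  have np: "cmod p = 1" "cmod q = 1" "cmod u = 1" "cmod v = 1"
    using assms unfolding p_def q_def u_def v_def by (simp_all add: norm_divide)
  have QP: "Q - P = r *\<^sub>R (q - p)" using assms(1) unfolding p_def q_def
    by (simp add: scaleR_conv_of_real field_simps)
  have SR: "S - R = r' *\<^sub>R (v - u)" using assms(2) unfolding u_def v_def
    by (simp add: scaleR_conv_of_real field_simps)
  have pq: "p \<noteq> q" using assms(1,7) unfolding p_def q_def by (auto simp: divide_cancel_right)
  have uv: "u \<noteq> v" using assms(2,8) unfolding u_def v_def by (auto simp: divide_cancel_right)
  have "(\<exists>c::real. S - R = c *\<^sub>R (Q - P)) \<longleftrightarrow> (\<exists>c::real. v - u = c *\<^sub>R (q - p))"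
  proof
    assume "\<exists>c::real. S - R = c *\<^sub>R (Q - P)"
    then obtain c where c: "S - R = c *\<^sub>R (Q - P)" by blast
    have "v - u = (c * r / r') *\<^sub>R (q - p)"
    proof -
      have "r' *\<^sub>R (v - u) = (c * r) *\<^sub>R (q - p)" using c QP SR by simp
      hence "(1/r') *\<^sub>R (r' *\<^sub>R (v - u)) = (1/r') *\<^sub>R ((c * r) *\<^sub>R (q - p))" by simp
      thus ?thesis using assms(2) by simp
    qed
    thus "\<exists>c::real. v - u = c *\<^sub>R (q - p)" by blast
  next
    assume "\<exists>c::real. v - u = c *\<^sub>R (q - p)"
    then obtain c where c: "v - u = c *\<^sub>R (q - p)" by blast
    have "S - R = (c * r' / r) *\<^sub>R (Q - P)"
      using assms(1) by (simp add: SR QP c)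
    thus "\<exists>c::real. S - R = c *\<^sub>R (Q - P)" by blast
  qed
  also have "\<dots> \<longleftrightarrow> p * q = u * v" using unit_par[OF np pq uv] .
  finally show ?thesis unfolding parallel_def p_def q_def u_def v_def using assms(7,8) by simp
qed


theorem lemma4p2:
  fixes O1 O2 X A B C D E F G H :: complex and r1 r2 :: real
  assumes "r1 > 0" and "r2 > 0"
    and "dist X O1 = r1" and "dist X O2 = r2"
    and "dist A O2 = r2" and "dist B O2 = r2" and "dist C O2 = r2" and "dist D O2 = r2"
    and "A \<noteq> X" and "B \<noteq> X" and "C \<noteq> X" and "D \<noteq> X"
    and "parallel A B C D"
    and "dist E O1 = r1" and "E \<noteq> X" and "collinear {X, A, E}"
    and "dist F O1 = r1" and "F \<noteq> X" and "collinear {X, B, F}"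
    and "dist G O1 = r1" and "G \<noteq> X" and "collinear {X, C, G}"
    and "dist H O1 = r1" and "H \<noteq> X" and "collinear {X, D, H}"
  shows "parallel E F G H"
proof -
  note d = dist_norm
  define u where "u = (\<lambda>P. (P - O2) / r2)"
  define v where "v = (\<lambda>P. (P - O1) / r1)"
  have AB: "A \<noteq> B" and CD: "C \<noteq> D" using assms(13) unfolding parallel_def by auto
  have uX0: "u X \<noteq> 0" unfolding u_def using assms(2,4) by (auto simp: d)
  have vX0: "v X \<noteq> 0" unfolding v_def using assms(1,3) by (auto simp: d)
  have pABCD: "u A * u B = u C * u D"
    using circ_par[of r2 r2 A O2 B C O2 D] assms AB CD unfolding u_def by (simp add: d)
  have eE: "u X * u A = v X * v E"
    using circ_par[of r2 r1 X O2 A X O1 E] coll_par[of X A E] assms unfolding u_def v_def by (simp add: d)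
  have eF: "u X * u B = v X * v F"
    using circ_par[of r2 r1 X O2 B X O1 F] coll_par[of X B F] assms unfolding u_def v_def by (simp add: d)
  have eG: "u X * u C = v X * v G"
    using circ_par[of r2 r1 X O2 C X O1 G] coll_par[of X C G] assms unfolding u_def v_def by (simp add: d)
  have eH: "u X * u D = v X * v H"
    using circ_par[of r2 r1 X O2 D X O1 H] coll_par[of X D H] assms unfolding u_def v_def by (simp add: d)
  have injv: "\<And>P Q. v P = v Q \<Longrightarrow> P = Q" unfolding v_def using assms(1) by (simp add: divide_cancel_right)
  have inju: "\<And>P Q. u P = u Q \<Longrightarrow> P = Q" unfolding u_def using assms(2) by (simp add: divide_cancel_right)
  have EF: "E \<noteq> F"
  proof
    assume "E = F"
    hence "u X * u A = u X * u B" using eE eF by simp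
    hence "u A = u B" using uX0 by simp
    thus False using inju AB by blast
  qed
  have GH: "G \<noteq> H"
  proof
    assume "G = H"
    hence "u X * u C = u X * u D" using eG eH by simp
    hence "u C = u D" using uX0 by simp
    thus False using inju CD by blast
  qed
  have "(v X * v E) * (v X * v F) = (v X * v G) * (v X * v H)"
    using eE eF eG eH pABCD by (metis mult.assoc mult.commute)
  hence "v X * v X * (v E * v F) = v X * v X * (v G * v H)" by (simp add: algebra_simps)
  hence "v E * v F = v G * v H" using vX0 by simp
  thus ?thesis
    using circ_par[of r1 r1 E O1 F G O1 H] assms EF GH unfolding v_def by (simp add: d)
qed

end
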